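(* If $A$ is a coherent Noetherian finitely Jacobson ring, then $A[X_1,\ldots,X_n]$ is finitely Jacobson for every $n\ge 0$.
   Context: All rings are commutative with identity. The setting is constructive mathematics: no law of excluded middle and no Zorn's lemma. For a ring $A$ and a subset $U\subseteq A$, $\langle U\rangle_A$ denotes the ideal generated by $U$. Define $\mathrm{Nil}_A U:=\{a\in A:\exists n\ge 0,\ a^n\in\langle U\rangle_A\}$ and $\mathrm{Jac}_A U:=\{a\in A:\forall b\in A,\ 1\in\langle U\cup\{1-ab\}\rangle_A\}$. A ring $A$ is called finitely Jacobson if every finitely generated ideal $I$ of $A$ satisfies $\mathrm{Jac}_A I\subseteq \mathrm{Nil}_A I$. "Coherent Noetherian" is in the constructive sense of Richman and Seidenberg (as in Mines–Richman–Ruitenburg, A Course in Constructive Algebra). Coherent means that for any finitely many elements $a_1,\dots,a_m\in A$, the module of syzygies $\{(x_1,\dots,x_m)\in A^m:\sum x_ia_i=0\}$ is finitely generated. Noetherian means that every ascending chain $I_1\subseteq I_2\subseteq\cdots$ of finitely generated ideals has some index $k$ with $I_k=I_{k+1}$. Two standard facts hold in this setting: a coherent Noetherian ring satisfies the contraction property (for every finitely generated ideal $J$ of $A[X]$, the ideal $J\cap A$ is finitely generated), and $A[X]$ is coherent Noetherian whenever $A$ is. *)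

theory Defs
  imports Main "HOL-Library.Poly_Mapping"
begin

(* All notions are relative to a carrier S (a subring of the ambient
   comm_ring_1 type); for the base ring A we use S = UNIV. *)

definition ideal_gen :: "'a::comm_ring_1 set \<Rightarrow> 'a set \<Rightarrow> 'a set" where
  "ideal_gen S U = {x. \<exists>F c. finite F \<and> F \<subseteq> U \<and> (\<forall>u\<in>F. c u \<in> S) \<and>
                        x = (\<Sum>u\<in>F. c u * u)}"

definition nil_rad :: "'a::comm_ring_1 set \<Rightarrow> 'a set \<Rightarrow> 'a set" where
  "nil_rad S U = {a\<in>S. \<exists>n::nat. a ^ n \<in> ideal_gen S U}"

definition jac_rad :: "'a::comm_ring_1 set \<Rightarrow> 'a set \<Rightarrow> 'a set" where
  "jac_rad S U = {a\<in>S. \<forall>b\<in>S. 1 \<in> ideal_gen S (U \<union> {1 - a * b})}"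

definition fg_ideal :: "'a::comm_ring_1 set \<Rightarrow> 'a set \<Rightarrow> bool" where
  "fg_ideal S I \<longleftrightarrow> (\<exists>F. finite F \<and> F \<subseteq> S \<and> I = ideal_gen S F)"

definition fin_jacobson :: "'a::comm_ring_1 set \<Rightarrow> bool" where
  "fin_jacobson S \<longleftrightarrow> (\<forall>I. fg_ideal S I \<longrightarrow> jac_rad S I \<subseteq> nil_rad S I)"

definition syzygies :: "'a::comm_ring_1 set \<Rightarrow> nat \<Rightarrow> (nat \<Rightarrow> 'a) \<Rightarrow> (nat \<Rightarrow> 'a) set" where
  "syzygies S m a = {x. (\<forall>i. x i \<in> S) \<and> (\<forall>i\<ge>m. x i = 0) \<and> (\<Sum>i<m. x i * a i) = 0}"

definition module_gen :: "'a::comm_ring_1 set \<Rightarrow> (nat \<Rightarrow> 'a) set \<Rightarrow> (nat \<Rightarrow> 'a) set" where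
  "module_gen S G = {x. \<exists>F c. finite F \<and> F \<subseteq> G \<and> (\<forall>g\<in>F. c g \<in> S) \<and>
                         x = (\<lambda>i. \<Sum>g\<in>F. c g * g i)}"

definition coherent :: "'a::comm_ring_1 set \<Rightarrow> bool" where
  "coherent S \<longleftrightarrow> (\<forall>m a. (\<forall>i<m. a i \<in> S) \<longrightarrow>
      (\<exists>G. finite G \<and> G \<subseteq> syzygies S m a \<and> syzygies S m a = module_gen S G))"

definition noetherian :: "'a::comm_ring_1 set \<Rightarrow> bool" where
  "noetherian S \<longleftrightarrow> (\<forall>I::nat \<Rightarrow> 'a set. (\<forall>k. fg_ideal S (I k)) \<and> (\<forall>k. I k \<subseteq> I (Suc k))
                      \<longrightarrow> (\<exists>k. I k = I (Suc k)))"

(* A[X_0,...,X_{n-1}] as the subring of ((nat =>0 nat) =>0 'a)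
   of polynomials only involving variables with index < n *)
definition mpolys :: "nat \<Rightarrow> (((nat, nat) poly_mapping, 'a::comm_ring_1) poly_mapping) set" where
  "mpolys n = {p. \<forall>mon\<in>Poly_Mapping.keys p. \<forall>i\<in>Poly_Mapping.keys mon. i < n}"

end

theory Submission
  imports Defs "HOL-Computational_Algebra.Polynomial"
begin


definition subr :: "'a::comm_ring_1 set \<Rightarrow> bool" where
  "subr S \<longleftrightarrow> 0 \<in> S \<and> 1 \<in> S \<and> (\<forall>x\<in>S. \<forall>y\<in>S. x + y \<in> S \<and> x * y \<in> S \<and> x - y \<in> S)"

definition isid :: "'a::comm_ring_1 set \<Rightarrow> 'a set \<Rightarrow> bool" where
  "isid S I \<longleftrightarrow> I \<subseteq> S \<and> 0 \<in> I \<and> (\<forall>x\<in>I. \<forall>y\<in>I. x + y \<in> I) \<and> (\<forall>s\<in>S. \<forall>x\<in>I. s * x \<in> I)"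

definition JAC :: "'a::comm_ring_1 set \<Rightarrow> bool" where
  "JAC S \<longleftrightarrow> (\<forall>I a. isid S I \<and> a \<in> S \<and> (\<forall>b\<in>S. \<exists>t\<in>S. 1 - t * (1 - a * b) \<in> I) \<longrightarrow> (\<exists>k. a ^ k \<in> I))"

definition primeid :: "'a::comm_ring_1 set \<Rightarrow> 'a set \<Rightarrow> bool" where
  "primeid T P \<longleftrightarrow> isid T P \<and> 1 \<notin> P \<and> (\<forall>y\<in>T. \<forall>z\<in>T. y * z \<in> P \<longrightarrow> y \<in> P \<or> z \<in> P)"

definition SP :: "'a::comm_ring_1 set \<Rightarrow> 'a poly set" where
  "SP S = {\<phi>. \<forall>i. coeff \<phi> i \<in> S}"

definition lowdeg :: "'a::comm_ring_1 set \<Rightarrow> nat \<Rightarrow> 'a poly \<Rightarrow> bool" where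
  "lowdeg P n \<phi> \<longleftrightarrow> (\<forall>i\<ge>n. coeff \<phi> i \<in> P)"

lemma subrD:
  assumes "subr S" "x \<in> S" "y \<in> S"
  shows "x + y \<in> S" "x * y \<in> S" "x - y \<in> S" "-x \<in> S"
proof -
  have h: "\<forall>x\<in>S. \<forall>y\<in>S. x + y \<in> S \<and> x * y \<in> S \<and> x - y \<in> S" "0 \<in> S" using assms(1) unfolding subr_def by auto
  show a: "x + y \<in> S" "x * y \<in> S" "x - y \<in> S" using h(1)[rule_format, OF assms(2,3)] by blast+
  have "0 - x \<in> S" using h(1)[rule_format, OF h(2) assms(2)] by blast
  then show "-x \<in> S" by simp
qed

lemma subr01: "subr S \<Longrightarrow> 0 \<in> S" "subr S \<Longrightarrow> 1 \<in> S"
  unfolding subr_def by auto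

lemma subr_sum: "subr S \<Longrightarrow> (\<And>i. i \<in> A \<Longrightarrow> f i \<in> S) \<Longrightarrow> sum f A \<in> S"
  by (induction A rule: infinite_finite_induct) (simp_all add: subr01 subrD(1))

lemma subr_pow: "subr S \<Longrightarrow> x \<in> S \<Longrightarrow> x ^ n \<in> S"
  by (induction n) (simp_all add: subr01 subrD(2))

lemma isidD:
  assumes "isid S I"
  shows "I \<subseteq> S" "0 \<in> I" "x \<in> I \<Longrightarrow> y \<in> I \<Longrightarrow> x + y \<in> I" "s \<in> S \<Longrightarrow> x \<in> I \<Longrightarrow> s * x \<in> I"
     "s \<in> S \<Longrightarrow> x \<in> I \<Longrightarrow> x * s \<in> I"
  using assms unfolding isid_def by (auto simp: mult.commute)

lemma isid_minus:
  assumes "subr S" "isid S I" "x \<in> I" "y \<in> I" shows "x - y \<in> I" "- x \<in> I"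
proof -
  have m1: "-1 \<in> S" using subrD(4)[OF assms(1) subr01(2)[OF assms(1)] subr01(2)[OF assms(1)]] .
  have "(-1) * y \<in> I" using isidD(4)[OF assms(2) m1 assms(4)] .
  then have "- y \<in> I" by (simp only: mult_minus1)
  then show "x - y \<in> I" using isidD(3)[OF assms(2) assms(3)] by (simp only: diff_conv_add_uminus mult_minus1)
  have "(-1) * x \<in> I" using isidD(4)[OF assms(2) m1 assms(3)] .
  then show "- x \<in> I" by (simp only: mult_minus1)
qed

lemma isid_neg: "subr S \<Longrightarrow> isid S I \<Longrightarrow> x \<in> I \<Longrightarrow> - x \<in> I"
  using isid_minus(2) by blast

lemma isid_sum: "isid S I \<Longrightarrow> (\<And>i. i \<in> A \<Longrightarrow> f i \<in> I) \<Longrightarrow> sum f A \<in> I"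
  by (induction A rule: infinite_finite_induct) (simp_all add: isidD(2,3))

lemma isid_diff_mem:
  assumes "subr S" "isid S I" "x - y \<in> I" "y \<in> I" shows "x \<in> I"
  using isidD(3)[OF assms(2) assms(3,4)] by (simp only: diff_add_cancel)

lemma SP_closed:
  assumes "subr S"
  shows "0 \<in> SP S" "1 \<in> SP S" "\<phi> \<in> SP S \<Longrightarrow> \<psi> \<in> SP S \<Longrightarrow> \<phi> + \<psi> \<in> SP S"
    "\<phi> \<in> SP S \<Longrightarrow> \<psi> \<in> SP S \<Longrightarrow> \<phi> - \<psi> \<in> SP S"
    "\<phi> \<in> SP S \<Longrightarrow> \<psi> \<in> SP S \<Longrightarrow> \<phi> * \<psi> \<in> SP S"
    "a \<in> S \<Longrightarrow> \<phi> \<in> SP S \<Longrightarrow> smult a \<phi> \<in> SP S"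
    "a \<in> S \<Longrightarrow> monom a n \<in> SP S"
    "a \<in> S \<Longrightarrow> [:a:] \<in> SP S"
  using assms unfolding SP_def
  by (auto simp: subr01 subrD coeff_mult coeff_monom coeff_1 intro!: subr_sum)
     (auto simp: coeff_pCons split: nat.splits simp: subr01)


definition Tx :: "'a::comm_ring_1 set \<Rightarrow> 'a \<Rightarrow> 'a set" where
  "Tx S x = {poly \<phi> x | \<phi>. \<phi> \<in> SP S}"

lemma Tx_subr:
  assumes "subr S" shows "subr (Tx S x)"
proof -
  have "poly \<phi> x + poly \<psi> x \<in> Tx S x" "poly \<phi> x * poly \<psi> x \<in> Tx S x" "poly \<phi> x - poly \<psi> x \<in> Tx S x"
    if "\<phi> \<in> SP S" "\<psi> \<in> SP S" for \<phi> \<psi>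
    unfolding Tx_def
    by (rule CollectI, rule exI[of _ "\<phi> + \<psi>"], simp add: SP_closed assms that,
        rule CollectI, rule exI[of _ "\<phi> * \<psi>"], simp add: SP_closed assms that,
        rule CollectI, rule exI[of _ "\<phi> - \<psi>"], simp add: SP_closed assms that)
  moreover have "0 \<in> Tx S x" unfolding Tx_def by (rule CollectI, rule exI[of _ 0], simp add: SP_closed assms)
  moreover have "1 \<in> Tx S x" unfolding Tx_def by (rule CollectI, rule exI[of _ 1], simp add: SP_closed assms)
  ultimately show ?thesis unfolding subr_def Tx_def by blast
qed

lemma Tx_poly: "\<phi> \<in> SP S \<Longrightarrow> poly \<phi> x \<in> Tx S x"
  unfolding Tx_def by blast

lemma Tx_const: "subr S \<Longrightarrow> s \<in> S \<Longrightarrow> s \<in> Tx S x"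
  using Tx_poly[of "[:s:]" S x] SP_closed(8)[of S s] by simp

lemma Tx_x: "subr S \<Longrightarrow> x \<in> Tx S x"
  using Tx_poly[of "monom 1 1" S x] SP_closed(7)[of S 1 1] subr01(2)[of S] by (simp add: poly_monom)

lemma Tx_sub: "subr S \<Longrightarrow> S \<subseteq> Tx S x"
  using Tx_const by blast

lemma eval_in_ideal:
  assumes "subr S" "isid (Tx S x) P" "\<phi> \<in> SP S" "\<And>i. coeff \<phi> i \<in> P"
  shows "poly \<phi> x \<in> P"
proof -
  have "poly \<phi> x = (\<Sum>i\<le>degree \<phi>. x ^ i * coeff \<phi> i)" by (simp add: poly_altdef mult.commute)
  also have "\<dots> \<in> P"
    by (rule isid_sum[OF assms(2)], rule isidD(4)[OF assms(2)], rule subr_pow[OF Tx_subr[OF assms(1)] Tx_x[OF assms(1)]], rule assms(4))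
  finally show ?thesis .
qed

lemma eval_lowdeg1:
  assumes "subr S" "isid (Tx S x) P" "\<phi> \<in> SP S" "lowdeg P 1 \<phi>"
  shows "poly \<phi> x - coeff \<phi> 0 \<in> P"
proof -
  have c0: "coeff \<phi> 0 \<in> S" using assms(3) unfolding SP_def by blast
  have "poly (\<phi> - [:coeff \<phi> 0:]) x \<in> P"
  proof (rule eval_in_ideal[OF assms(1,2)])
    show "\<phi> - [:coeff \<phi> 0:] \<in> SP S" using SP_closed(4,8)[OF assms(1)] assms(3) c0 by blast
    fix i show "coeff (\<phi> - [:coeff \<phi> 0:]) i \<in> P"
    proof (cases i)
      case 0 then show ?thesis using isidD(2)[OF assms(2)] by simp
    next
      case (Suc j) then show ?thesis using assms(4) unfolding lowdeg_def by simp
    qed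
  qed
  then show ?thesis by simp
qed

lemma lead_exists:
  assumes "\<not> lowdeg P 0 \<phi>" "0 \<in> P"
  shows "\<exists>j. coeff \<phi> j \<notin> P \<and> lowdeg P (Suc j) \<phi>"
proof -
  have ex: "\<exists>n. lowdeg P n \<phi>"
    by (rule exI[of _ "Suc (degree \<phi>)"]) (simp add: lowdeg_def coeff_eq_0 assms(2))
  define n where "n = (LEAST n. lowdeg P n \<phi>)"
  have n1: "lowdeg P n \<phi>" unfolding n_def by (rule LeastI_ex[OF ex])
  have n0: "n \<noteq> 0"
  proof
    assume "n = 0" with n1 assms(1) show False by simp
  qed
  then obtain j where j: "n = Suc j" by (cases n) auto
  have "\<not> lowdeg P j \<phi>" using not_less_Least[of j "\<lambda>n. lowdeg P n \<phi>"] j unfolding n_def by simp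
  then have "coeff \<phi> j \<notin> P" using n1 j unfolding lowdeg_def by (metis Suc_le_eq le_neq_implies_less)
  then show ?thesis using n1 j by blast
qed

lemma lowdeg_mono: "lowdeg P n \<phi> \<Longrightarrow> n \<le> m \<Longrightarrow> lowdeg P m \<phi>"
  unfolding lowdeg_def by auto

lemma prod_lead:
  assumes S: "subr S" and P: "primeid (Tx S x) P"
    and f: "\<phi> \<in> SP S" "coeff \<phi> i \<notin> P" "lowdeg P (Suc i) \<phi>"
    and g: "\<psi> \<in> SP S" "coeff \<psi> j \<notin> P" "lowdeg P (Suc j) \<psi>"
  shows "coeff (\<phi> * \<psi>) (i + j) \<notin> P" "lowdeg P (Suc (i + j)) (\<phi> * \<psi>)"
proof -
  have I: "isid (Tx S x) P" using P unfolding primeid_def by blast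
  have TS: "S \<subseteq> Tx S x" using Tx_sub[OF S] .
  have cS: "coeff \<phi> k \<in> Tx S x" "coeff \<psi> k \<in> Tx S x" for k using f(1) g(1) TS unfolding SP_def by auto
  have trm: "coeff \<phi> k * coeff \<psi> (n - k) \<in> P" if "k \<le> n" "k \<noteq> i \<or> n \<noteq> i + j" "n \<ge> i + j" for k n
  proof (cases "k > i")
    case True
    then have "coeff \<phi> k \<in> P" using f(3) unfolding lowdeg_def by simp
    then show ?thesis using isidD(5)[OF I cS(2)] by blast
  next
    case False
    then have "n - k > j" using that by auto
    then have "coeff \<psi> (n - k) \<in> P" using g(3) unfolding lowdeg_def by simp
    then show ?thesis using isidD(4)[OF I cS(1)] by blast
  qed
  show "lowdeg P (Suc (i + j)) (\<phi> * \<psi>)"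
    unfolding lowdeg_def coeff_mult
    by (intro allI impI isid_sum[OF I] trm) auto
  show "coeff (\<phi> * \<psi>) (i + j) \<notin> P"
  proof
    assume A: "coeff (\<phi> * \<psi>) (i + j) \<in> P"
    have split: "coeff (\<phi> * \<psi>) (i + j) = coeff \<phi> i * coeff \<psi> j + (\<Sum>k\<in>{..i+j} - {i}. coeff \<phi> k * coeff \<psi> (i + j - k))"
      unfolding coeff_mult by (subst sum.remove[of _ i]) auto
    have rest: "(\<Sum>k\<in>{..i+j} - {i}. coeff \<phi> k * coeff \<psi> (i + j - k)) \<in> P"
      by (rule isid_sum[OF I], rule trm) auto
    have "coeff \<phi> i * coeff \<psi> j \<in> P"
      using isid_minus(1)[OF Tx_subr[OF S] I A rest] split by simp
    then show False using P f(2) g(2) cS unfolding primeid_def by blast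
  qed
qed


lemma pdiv:
  assumes S: "subr S" and I: "isid (Tx S x) P" and G: "G \<in> SP S" "lowdeg P (Suc L) G"
  shows "H \<in> SP S \<Longrightarrow> lowdeg P n H \<Longrightarrow> \<exists>k Q. Q \<in> SP S \<and> lowdeg P L (smult (coeff G L ^ k) H - Q * G)"
proof (induction n arbitrary: H)
  case 0
  show ?case by (rule exI[of _ 0], rule exI[of _ 0]) (use 0 SP_closed(1)[OF S] lowdeg_mono in auto)
next
  case (Suc n')
  show ?case
  proof (cases "Suc n' \<le> L")
    case True
    then show ?thesis by (intro exI[of _ 0] exI[of _ 0]) (use Suc SP_closed(1)[OF S] lowdeg_mono in auto)
  next
    case False
    then have nL: "L \<le> n'" by simp
    define g where "g = coeff G L"
    define h where "h = coeff H n'"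
    have gS: "g \<in> S" using G(1) unfolding g_def SP_def by blast
    have hS: "h \<in> S" using Suc.prems(1) unfolding h_def SP_def by blast
    have TS: "S \<subseteq> Tx S x" using Tx_sub[OF S] .
    define H' where "H' = smult g H - monom h (n' - L) * G"
    have H'S: "H' \<in> SP S" unfolding H'_def
      by (intro SP_closed[OF S] gS hS Suc.prems(1) G(1))
    have "lowdeg P n' H'"
      unfolding lowdeg_def
    proof (intro allI impI)
      fix i assume i: "n' \<le> i"
      have ci: "coeff H' i = g * coeff H i - h * coeff G (i - (n' - L))"
        unfolding H'_def using i nL by (simp add: coeff_monom_mult)
      show "coeff H' i \<in> P"
      proof (cases "i = n'")
        case True
        then have "i - (n' - L) = L" using nL by simp
        then show ?thesis using ci True isidD(2)[OF I] by (simp add: g_def h_def mult.commute)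
      next
        case False
        then have a: "coeff H i \<in> P" using Suc.prems(2) i unfolding lowdeg_def by simp
        have b: "coeff G (i - (n' - L)) \<in> P" using G(2) False i nL unfolding lowdeg_def by simp
        show ?thesis unfolding ci
          by (rule isid_minus(1)[OF Tx_subr[OF S] I]; rule isidD(4)[OF I]) (use a b gS hS TS in auto)
      qed
    qed
    from Suc.IH[OF H'S this] obtain k Q where kQ: "Q \<in> SP S" "lowdeg P L (smult (g ^ k) H' - Q * G)"
      unfolding g_def by blast
    define Q' where "Q' = smult (g ^ k) (monom h (n' - L)) + Q"
    have Q'S: "Q' \<in> SP S" unfolding Q'_def
      by (intro SP_closed[OF S] subr_pow[OF S gS] hS kQ(1))
    have eq: "smult (g ^ Suc k) H - Q' * G = smult (g ^ k) H' - Q * G"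
      unfolding H'_def Q'_def by (simp add: smult_diff_right algebra_simps)
    show ?thesis
      by (rule exI[of _ "Suc k"], rule exI[of _ Q']) (use Q'S kQ(2) eq g_def in auto)
  qed
qed


lemma nil_lemma:
  assumes S: "subr S" and A: "isid S a" and m: "m \<in> SP S" "lowdeg a (Suc d) m" "d \<ge> 1"
    and Q: "Q \<in> SP S" and hi: "\<And>i. i \<ge> 1 \<Longrightarrow> coeff (Q * m) i \<in> a"
    and lo: "coeff (Q * m) 0 + coeff m d ^ k \<in> a"
  shows "\<exists>j. coeff m d ^ j \<in> a"
proof -
  define c where "c = coeff m d"
  define N where "N = Suc (degree Q)"
  have cS: "c \<in> S" using m(1) unfolding c_def SP_def by blast
  have mS: "coeff m j \<in> S" for j using m(1) unfolding SP_def by blast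
  have qS: "coeff Q j \<in> S" for j using Q unfolding SP_def by blast
  have main: "\<forall>i. i \<ge> N - r \<longrightarrow> c ^ (N - i) * coeff Q i \<in> a" for r
  proof (induction r)
    case 0
    show ?case
    proof (intro allI impI)
      fix i assume "N - 0 \<le> i"
      then have "coeff Q i = 0" unfolding N_def by (simp add: coeff_eq_0)
      then show "c ^ (N - i) * coeff Q i \<in> a" using isidD(2)[OF A] by simp
    qed
  next
    case (Suc r)
    show ?case
    proof (intro allI impI)
      fix i assume i: "N - Suc r \<le> i"
      show "c ^ (N - i) * coeff Q i \<in> a"
      proof (cases "N - r \<le> i")
        case True then show ?thesis using Suc.IH by blast
      next
        case False
        then have iN: "i = N - Suc r" "r < N" using i by auto
        define e where "e = N - Suc i"
        have e: "N - i = Suc e" using iN unfolding e_def by auto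
        have sum_eq: "coeff (Q * m) (i + d) = coeff Q i * c + (\<Sum>j\<in>{..i+d} - {i}. coeff Q j * coeff m (i + d - j))"
          unfolding coeff_mult c_def by (subst sum.remove[of _ i]) auto
        have rest: "c ^ e * (\<Sum>j\<in>{..i+d} - {i}. coeff Q j * coeff m (i + d - j)) \<in> a"
          unfolding sum_distrib_left
        proof (rule isid_sum[OF A])
          fix j assume j: "j \<in> {..i+d} - {i}"
          show "c ^ e * (coeff Q j * coeff m (i + d - j)) \<in> a"
          proof (cases "j < i")
            case True
            then have "coeff m (i + d - j) \<in> a" using m(2) unfolding lowdeg_def by auto
            then have "(c ^ e * coeff Q j) * coeff m (i + d - j) \<in> a"
              using isidD(4)[OF A] subrD(2)[OF S subr_pow[OF S cS] qS] by blast
            then show ?thesis by (simp add: mult.assoc)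
          next
            case False
            then have ji: "j > i" using j by auto
            then have "j \<ge> N - r" using iN by auto
            then have IH: "c ^ (N - j) * coeff Q j \<in> a" using Suc.IH by blast
            have le: "N - j \<le> e" using ji unfolding e_def by auto
            have "c ^ e = c ^ (e - (N - j)) * c ^ (N - j)" using le by (simp add: power_add[symmetric])
            then have "c ^ e * (coeff Q j * coeff m (i + d - j)) = (c ^ (e - (N - j)) * coeff m (i + d - j)) * (c ^ (N - j) * coeff Q j)"
              by (simp add: algebra_simps)
            then show ?thesis using isidD(4)[OF A subrD(2)[OF S subr_pow[OF S cS] mS] IH] by simp
          qed
        qed
        have top: "c ^ e * coeff (Q * m) (i + d) \<in> a"
          using isidD(4)[OF A subr_pow[OF S cS] hi[of "i + d"]] m(3) by simp
        have "c ^ (N - i) * coeff Q i = c ^ e * coeff (Q * m) (i + d) - c ^ e * (\<Sum>j\<in>{..i+d} - {i}. coeff Q j * coeff m (i + d - j))"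
          unfolding sum_eq e by (simp add: algebra_simps)
        then show ?thesis using isid_minus(1)[OF S A top rest] by simp
      qed
    qed
  qed
  have q0: "c ^ N * coeff Q 0 \<in> a" using spec[OF main[of N], of 0] by simp
  have c0: "coeff (Q * m) 0 = coeff Q 0 * coeff m 0" by (simp add: coeff_mult)
  have t1: "c ^ N * (coeff (Q * m) 0 + c ^ k) \<in> a"
    using isidD(4)[OF A subr_pow[OF S cS] lo] unfolding c_def .
  have t2: "c ^ N * coeff (Q * m) 0 \<in> a"
    using isidD(4)[OF A mS q0] unfolding c0 by (simp add: algebra_simps)
  have "c ^ (N + k) = c ^ N * (coeff (Q * m) 0 + c ^ k) - c ^ N * coeff (Q * m) 0"
    by (simp add: algebra_simps power_add)
  then have "c ^ (N + k) \<in> a" using isid_minus(1)[OF S A t1 t2] by simp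
  then show ?thesis unfolding c_def by blast
qed


lemma prime_pow: "primeid T P \<Longrightarrow> y \<in> T \<Longrightarrow> subr T \<Longrightarrow> y ^ k \<in> P \<Longrightarrow> y \<in> P"
proof (induction k)
  case 0 then show ?case unfolding primeid_def by simp
next
  case (Suc k)
  have "y ^ k \<in> T" using subr_pow[OF Suc.prems(3,2)] .
  then show ?case using Suc unfolding primeid_def by auto
qed

lemma primeid_mult: "primeid T P \<Longrightarrow> y \<in> T \<Longrightarrow> z \<in> T \<Longrightarrow> y \<notin> P \<Longrightarrow> z \<notin> P \<Longrightarrow> y * z \<notin> P"
  unfolding primeid_def by blast

lemma get_poly: "y \<in> Tx S x \<Longrightarrow> \<exists>\<phi>. \<phi> \<in> SP S \<and> y = poly \<phi> x"
  unfolding Tx_def by blast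

lemma SP_coeff: "\<phi> \<in> SP S \<Longrightarrow> coeff \<phi> i \<in> S"
  unfolding SP_def by blast

lemma case_transc:
  assumes S: "subr S" and P: "primeid (Tx S x) P" and F: "F \<in> SP S" "poly F x \<notin> P"
    and jac: "\<forall>b\<in>Tx S x. \<exists>t\<in>Tx S x. 1 - t * (1 - poly F x * b) \<in> P"
    and tr: "\<forall>\<phi>. \<phi> \<in> SP S \<and> poly \<phi> x \<in> P \<longrightarrow> lowdeg P 0 \<phi>"
  shows False
proof -
  let ?T = "Tx S x"
  have I: "isid ?T P" and one: "1 \<notin> P" using P unfolding primeid_def by auto
  have ST: "subr ?T" using Tx_subr[OF S] .
  obtain t where t: "t \<in> ?T" "1 - t * (1 - poly F x * x) \<in> P" using jac Tx_x[OF S] by blast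
  obtain Tt where Tt: "Tt \<in> SP S" "t = poly Tt x" using get_poly[OF t(1)] by blast
  have m1S: "-1 \<in> S" using subrD(4)[OF S subr01(2)[OF S] subr01(2)[OF S]] .
  define B where "B = 1 + monom (-1) 1 * F"
  have BS: "B \<in> SP S" unfolding B_def by (intro SP_closed[OF S] m1S F(1))
  have polyB: "poly B x = 1 - poly F x * x" unfolding B_def by (simp add: poly_monom algebra_simps)
  define \<Psi> where "\<Psi> = 1 - Tt * B"
  have PsiS: "\<Psi> \<in> SP S" unfolding \<Psi>_def by (intro SP_closed[OF S] Tt(1) BS)
  have "poly \<Psi> x \<in> P" unfolding \<Psi>_def using t(2) Tt(2) polyB by simp
  then have Psi0: "lowdeg P 0 \<Psi>" using tr PsiS by blast
  have "\<not> lowdeg P 0 F"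
  proof
    assume "lowdeg P 0 F"
    then have "poly F x \<in> P" using eval_in_ideal[OF S I F(1)] unfolding lowdeg_def by blast
    then show False using F(2) by blast
  qed
  then obtain e where e: "coeff F e \<notin> P" "lowdeg P (Suc e) F" using lead_exists isidD(2)[OF I] by blast
  have mon: "coeff (monom (-1) 1 :: 'a poly) 1 \<notin> P" "lowdeg P (Suc 1) (monom (-1) 1)"
  proof -
    show "coeff (monom (-1) 1 :: 'a poly) 1 \<notin> P"
    proof
      assume "coeff (monom (-1) 1 :: 'a poly) 1 \<in> P"
      then have "-1 \<in> P" by simp
      then have "- (-1) \<in> P" using isid_neg[OF ST I] by blast
      then show False using one by simp
    qed
    show "lowdeg P (Suc 1) (monom (-1) 1)" unfolding lowdeg_def using isidD(2)[OF I] by (simp add: coeff_monom)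
  qed
  have mF: "coeff (monom (-1) 1 * F) (1 + e) \<notin> P" "lowdeg P (Suc (1 + e)) (monom (-1) 1 * F)"
    using prod_lead[OF S P SP_closed(7)[OF S m1S] mon F(1) e] by auto
  have cB: "coeff B i = coeff (monom (-1) 1 * F) i" if "i \<ge> 1" for i
    unfolding B_def using that by (simp add: coeff_1)
  have Be: "coeff B (Suc e) \<notin> P" "lowdeg P (Suc (Suc e)) B"
    using mF cB unfolding lowdeg_def by auto
  have "\<not> lowdeg P 0 Tt"
  proof
    assume "lowdeg P 0 Tt"
    then have "t \<in> P" using eval_in_ideal[OF S I Tt(1)] Tt(2) unfolding lowdeg_def by blast
    then have "t * (1 - poly F x * x) \<in> P"
      using isidD(5)[OF I _ \<open>t \<in> P\<close>] subrD(3)[OF ST subr01(2)[OF ST] subrD(2)[OF ST Tx_poly[OF F(1)] Tx_x[OF S]]] by blast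
    then have "1 \<in> P" using isid_diff_mem[OF ST I t(2)] by blast
    then show False using one by blast
  qed
  then obtain r where r: "coeff Tt r \<notin> P" "lowdeg P (Suc r) Tt" using lead_exists isidD(2)[OF I] by blast
  have "coeff (Tt * B) (r + Suc e) \<notin> P" using prod_lead(1)[OF S P Tt(1) r BS Be] .
  moreover have "coeff \<Psi> (r + Suc e) \<in> P" using Psi0 unfolding lowdeg_def by blast
  then have "- coeff \<Psi> (r + Suc e) \<in> P" using isid_neg[OF ST I] by blast
  then have "coeff (Tt * B) (r + Suc e) \<in> P" unfolding \<Psi>_def by (simp add: coeff_1)
  ultimately show False by blast
qed


lemma find_g0:
  assumes S: "subr S" and P: "primeid (Tx S x) P" and F: "F \<in> SP S" "poly F x \<notin> P"
    and m: "m \<in> SP S" "poly m x \<in> P" "coeff m L \<notin> P" "lowdeg P (Suc L) m" "L \<ge> 1"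
    and minrel: "\<And>\<psi> n. \<psi> \<in> SP S \<Longrightarrow> poly \<psi> x \<in> P \<Longrightarrow> lowdeg P n \<psi> \<Longrightarrow> n < Suc L \<Longrightarrow> lowdeg P 0 \<psi>"
  shows "\<exists>g0 U. g0 \<in> S \<and> g0 \<notin> P \<and> U \<in> SP S \<and> g0 - poly U x * poly F x \<in> P"
proof -
  let ?T = "Tx S x"
  have I: "isid ?T P" and one: "1 \<notin> P" using P unfolding primeid_def by auto
  have ST: "subr ?T" using Tx_subr[OF S] .
  have TS: "S \<subseteq> ?T" using Tx_sub[OF S] .
  define gam where "gam \<psi> \<longleftrightarrow> (\<exists>U V. U \<in> SP S \<and> V \<in> SP S \<and> \<psi> = U * F + V * m)" for \<psi>
  define Q where "Q n \<longleftrightarrow> (\<exists>\<psi>. \<psi> \<in> SP S \<and> gam \<psi> \<and> poly \<psi> x \<notin> P \<and> lowdeg P n \<psi>)" for n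
  have gF: "gam F" unfolding gam_def
    by (rule exI[of _ 1], rule exI[of _ 0]) (simp add: SP_closed(1,2)[OF S])
  have "lowdeg P (Suc (degree F)) F" using isidD(2)[OF I] by (simp add: lowdeg_def coeff_eq_0)
  then have "Q (Suc (degree F))" unfolding Q_def using F gF by blast
  then have exQ: "\<exists>n. Q n" by blast
  define e where "e = (LEAST n. Q n)"
  have Qe: "Q e" unfolding e_def by (rule LeastI_ex[OF exQ])
  have minQ: "\<not> Q n" if "n < e" for n using not_less_Least[of n Q] that unfolding e_def by blast
  obtain G U V where G: "G \<in> SP S" "U \<in> SP S" "V \<in> SP S" "G = U * F + V * m" "poly G x \<notin> P" "lowdeg P e G"
    using Qe unfolding Q_def gam_def by blast
  have mT: "poly m x \<in> ?T" "poly U x \<in> ?T" "poly V x \<in> ?T" "poly F x \<in> ?T" "poly G x \<in> ?T"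
    using Tx_poly m(1) G F(1) by blast+
  have e0: "e \<noteq> 0"
  proof
    assume "e = 0"
    then have "poly G x \<in> P" using eval_in_ideal[OF S I G(1)] G(6) unfolding lowdeg_def by blast
    then show False using G(5) by blast
  qed
  have e1: "e = 1"
  proof (rule ccontr)
    assume "e \<noteq> 1"
    then obtain E where E: "e = Suc E" "E \<ge> 1" using e0 by (cases e) auto
    have gE: "coeff G E \<notin> P"
    proof
      assume "coeff G E \<in> P"
      then have "lowdeg P E G" using G(6) E unfolding lowdeg_def by (metis le_antisym not_less_eq_eq)
      then have "Q E" unfolding Q_def gam_def using G by blast
      then show False using minQ E by simp
    qed
    have gES: "coeff G E \<in> S" using SP_coeff[OF G(1)] .
    have cS: "coeff m L \<in> S" using SP_coeff[OF m(1)] .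
    show False
    proof (cases "L \<le> E")
      case True
      obtain k Qd where kQ: "Qd \<in> SP S" "lowdeg P L (smult (coeff m L ^ k) G - Qd * m)"
        using pdiv[OF S I m(1) m(4) G(1), of "Suc (degree G)"] by (auto simp: lowdeg_def coeff_eq_0 isidD(2)[OF I])
      define R where "R = smult (coeff m L ^ k) G - Qd * m"
      have RS: "R \<in> SP S" unfolding R_def by (intro SP_closed[OF S] subr_pow[OF S cS] G(1) kQ(1) m(1))
      have gR: "gam R" unfolding gam_def R_def G(4)
        by (rule exI[of _ "smult (coeff m L ^ k) U"], rule exI[of _ "smult (coeff m L ^ k) V - Qd"])
           (auto simp: SP_closed[OF S] subr_pow[OF S cS] G kQ(1) algebra_simps smult_add_right smult_diff_right)
      have "lowdeg P E R" using lowdeg_mono[OF kQ(2) True] unfolding R_def .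
      then have "poly R x \<in> P" using minQ[of E] E RS gR unfolding Q_def by auto
      moreover have "poly Qd x * poly m x \<in> P" using isidD(4)[OF I Tx_poly[OF kQ(1)] m(2)] .
      ultimately have "coeff m L ^ k * poly G x \<in> P"
        using isidD(3)[OF I] unfolding R_def by fastforce
      then have "coeff m L ^ k \<in> P \<or> poly G x \<in> P"
        using P subr_pow[OF ST] TS cS mT unfolding primeid_def by blast
      then show False using prime_pow[OF P _ ST, of "coeff m L" k] TS cS m(3) G(5) by blast
    next
      case False
      then have EL: "E < L" by simp
      obtain k Qd where kQ: "Qd \<in> SP S" "lowdeg P E (smult (coeff G E ^ k) m - Qd * G)"
        using pdiv[OF S I G(1) _ m(1), of E "Suc (degree m)"] G(6) E
        by (auto simp: lowdeg_def coeff_eq_0 isidD(2)[OF I])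
      define R where "R = smult (coeff G E ^ k) m - Qd * G"
      have RS: "R \<in> SP S" unfolding R_def by (intro SP_closed[OF S] subr_pow[OF S gES] G(1) kQ(1) m(1))
      have w1: "- (Qd * U) \<in> SP S" using SP_closed(4)[OF S SP_closed(1)[OF S] SP_closed(5)[OF S kQ(1) G(2)]] by simp
      have w2: "[:coeff G E ^ k:] - Qd * V \<in> SP S" by (intro SP_closed[OF S] subr_pow[OF S gES] kQ(1) G(3))
      have "R = - (Qd * U) * F + ([:coeff G E ^ k:] - Qd * V) * m"
        unfolding R_def by (subst (2) G(4)) (simp add: algebra_simps mult_pCons_left)
      then have gR: "gam R" unfolding gam_def using w1 w2 by blast
      have "poly R x \<in> P" using minQ[of E] E RS gR kQ(2) unfolding Q_def R_def by auto
      moreover have "coeff G E ^ k * poly m x \<in> P" using isidD(4)[OF I _ m(2)] subr_pow[OF S gES] TS by blast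
      ultimately have "poly Qd x * poly G x \<in> P"
        using isid_minus(1)[OF ST I] unfolding R_def by fastforce
      then have QdP: "poly Qd x \<in> P" using P Tx_poly[OF kQ(1)] mT G(5) unfolding primeid_def by blast
      have QG: "coeff (Qd * G) i = coeff G E ^ k * coeff m i - coeff R i" for i
        unfolding R_def by simp
      have RL: "coeff R i \<in> P" if "i \<ge> E" for i using kQ(2) that unfolding R_def lowdeg_def by blast
      have gkT: "coeff G E ^ k \<in> ?T" using subr_pow[OF S gES] TS by blast
      have "\<not> lowdeg P 0 Qd"
      proof
        assume A: "lowdeg P 0 Qd"
        have "coeff (Qd * G) L \<in> P" unfolding coeff_mult
          by (rule isid_sum[OF I], rule isidD(5)[OF I]) (use A TS SP_coeff[OF G(1)] in \<open>auto simp: lowdeg_def\<close>)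
        then have "coeff G E ^ k * coeff m L \<in> P"
          using isidD(3)[OF I _ RL[of L]] EL QG[of L] by fastforce
        moreover have "coeff G E ^ k \<notin> P" using prime_pow[OF P gkT[unfolded subset_eq] ST] gE TS gES
          by (metis prime_pow[OF P _ ST] subsetD)
        ultimately show False using primeid_mult[OF P gkT _ _ m(3)] TS cS by blast
      qed
      then obtain j where j: "coeff Qd j \<notin> P" "lowdeg P (Suc j) Qd" using lead_exists isidD(2)[OF I] by blast
      have pl: "coeff (Qd * G) (j + E) \<notin> P"
        using prod_lead(1)[OF S P kQ(1) j G(1) gE] G(6) E by simp
      have "j + E \<le> L"
      proof (rule ccontr)
        assume "\<not> j + E \<le> L"
        then have "coeff m (j + E) \<in> P" using m(4) unfolding lowdeg_def by simp
        then have "coeff G E ^ k * coeff m (j + E) \<in> P" using isidD(4)[OF I gkT] by blast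
        then have "coeff (Qd * G) (j + E) \<in> P" using isid_minus(1)[OF ST I _ RL[of "j + E"]] QG by simp
        then show False using pl by blast
      qed
      then have "Suc j < Suc L" using E by simp
      then have "lowdeg P 0 Qd" using minrel[OF kQ(1) QdP j(2)] by blast
      then show False using \<open>\<not> lowdeg P 0 Qd\<close> by blast
    qed
  qed
  have gE: "lowdeg P 1 G" using G(6) e1 by simp
  have d1: "poly G x - coeff G 0 \<in> P" using eval_lowdeg1[OF S I G(1) gE] .
  have g0S: "coeff G 0 \<in> S" using SP_coeff[OF G(1)] .
  have g0P: "coeff G 0 \<notin> P"
  proof
    assume "coeff G 0 \<in> P"
    then have "poly G x - coeff G 0 + coeff G 0 \<in> P" using isidD(3)[OF I d1] by blast
    then have "poly G x \<in> P" by simp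
    then show False using G(5) by blast
  qed
  have "poly V x * poly m x \<in> P" using isidD(4)[OF I mT(3) m(2)] .
  then have "coeff G 0 - poly U x * poly F x = (poly V x * poly m x) - (poly G x - coeff G 0)"
    and "poly V x * poly m x \<in> P" using G(4) by (simp_all add: algebra_simps)
  then have "coeff G 0 - poly U x * poly F x \<in> P" using isid_minus(1)[OF ST I _ d1] by metis
  then show ?thesis using g0S g0P G(2) by blast
qed


lemma prime_case:
  assumes S: "subr S" and J: "JAC S" and P: "primeid (Tx S x) P" and f: "f \<in> Tx S x" "f \<notin> P"
    and jac: "\<forall>b\<in>Tx S x. \<exists>t\<in>Tx S x. 1 - t * (1 - f * b) \<in> P"
  shows False
proof -
  let ?T = "Tx S x"
  have I: "isid ?T P" and one: "1 \<notin> P" using P unfolding primeid_def by auto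
  have ST: "subr ?T" using Tx_subr[OF S] .
  have TS: "S \<subseteq> ?T" using Tx_sub[OF S] .
  obtain F where F: "F \<in> SP S" "f = poly F x" using get_poly[OF f(1)] by blast
  show False
  proof (cases "\<forall>\<phi>. \<phi> \<in> SP S \<and> poly \<phi> x \<in> P \<longrightarrow> lowdeg P 0 \<phi>")
    case True
    show False by (rule case_transc[OF S P F(1) _ _ True]) (use f F jac in auto)
  next
    case False
    then obtain \<phi>0 where phi0: "\<phi>0 \<in> SP S" "poly \<phi>0 x \<in> P" "\<not> lowdeg P 0 \<phi>0" by blast
    define Rl where "Rl n \<longleftrightarrow> (\<exists>\<psi>. \<psi> \<in> SP S \<and> poly \<psi> x \<in> P \<and> \<not> lowdeg P 0 \<psi> \<and> lowdeg P n \<psi>)" for n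
    have "lowdeg P (Suc (degree \<phi>0)) \<phi>0" using isidD(2)[OF I] by (simp add: lowdeg_def coeff_eq_0)
    then have "Rl (Suc (degree \<phi>0))" unfolding Rl_def using phi0 by blast
    then have exR: "\<exists>n. Rl n" by blast
    define d where "d = (LEAST n. Rl n)"
    have Rd: "Rl d" unfolding d_def by (rule LeastI_ex[OF exR])
    have minR: "\<not> Rl n" if "n < d" for n using not_less_Least[of n Rl] that unfolding d_def by blast
    obtain m where m: "m \<in> SP S" "poly m x \<in> P" "\<not> lowdeg P 0 m" "lowdeg P d m"
      using Rd unfolding Rl_def by blast
    have "d \<noteq> 0"
    proof
      assume "d = 0" then show False using m(3,4) by simp
    qed
    then obtain L where L: "d = Suc L" by (cases d) auto
    have cP: "coeff m L \<notin> P"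
    proof
      assume "coeff m L \<in> P"
      then have "lowdeg P L m" using m(4) L unfolding lowdeg_def by (metis le_antisym not_less_eq_eq)
      then have "Rl L" unfolding Rl_def using m by blast
      then show False using minR L by simp
    qed
    have minrel: "lowdeg P 0 \<psi>" if "\<psi> \<in> SP S" "poly \<psi> x \<in> P" "lowdeg P n \<psi>" "n < Suc L" for \<psi> n
      using minR[of n] that L unfolding Rl_def by blast
    have cS: "coeff m L \<in> S" using SP_coeff[OF m(1)] .
    have L1: "L \<ge> 1"
    proof (rule ccontr)
      assume "\<not> L \<ge> 1"
      then have L0: "L = 0" by simp
      have "poly m x - coeff m 0 \<in> P" using eval_lowdeg1[OF S I m(1)] m(4) L L0 by simp
      then have "coeff m 0 \<in> P" using isid_minus(1)[OF ST I m(2)] by fastforce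
      then show False using cP L0 by simp
    qed
    obtain g0 U where g0: "g0 \<in> S" "g0 \<notin> P" "U \<in> SP S" "g0 - poly U x * poly F x \<in> P"
    proof -
      have Fx: "poly F x \<notin> P" using f F by simp
      have mL: "lowdeg P (Suc L) m" using m(4) L by simp
      have "\<exists>g0 U. g0 \<in> S \<and> g0 \<notin> P \<and> U \<in> SP S \<and> g0 - poly U x * poly F x \<in> P"
        by (rule find_g0[OF S P F(1) Fx m(1,2) cP mL L1]) (rule minrel; assumption)
      then show ?thesis using that by blast
    qed
    define c where "c = coeff m L"
    define u where "u = poly U x"
    have uT: "u \<in> ?T" unfolding u_def using Tx_poly[OF g0(3)] .
    define h where "h = g0 * c"
    have hS: "h \<in> S" unfolding h_def c_def using subrD(2)[OF S g0(1) cS] .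
    have hP: "h \<notin> P" unfolding h_def c_def using primeid_mult[OF P _ _ g0(2) cP] TS g0(1) cS by blast
    define p where "p = P \<inter> S"
    have pid: "isid S p" unfolding isid_def
    proof (intro conjI ballI)
      show "p \<subseteq> S" "0 \<in> p" unfolding p_def using isidD(2)[OF I] subr01(1)[OF S] by auto
    next
      fix y z assume "y \<in> p" "z \<in> p"
      then show "y + z \<in> p" unfolding p_def using isidD(3)[OF I] subrD(1)[OF S] by auto
    next
      fix y z assume "y \<in> S" "z \<in> p"
      then show "y * z \<in> p" unfolding p_def using isidD(4)[OF I] subrD(2)[OF S] TS by auto
    qed
    have "\<not> (\<exists>k. h ^ k \<in> p)"
    proof
      assume "\<exists>k. h ^ k \<in> p"
      then obtain k where "h ^ k \<in> P" unfolding p_def by blast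
      then show False using prime_pow[OF P _ ST, of h k] hP hS TS by blast
    qed
    moreover have "(\<forall>b\<in>S. \<exists>t\<in>S. 1 - t * (1 - h * b) \<in> p) \<Longrightarrow> (\<exists>k. h ^ k \<in> p)"
      using J pid hS unfolding JAC_def by blast
    ultimately obtain b where b: "b \<in> S" "\<forall>t\<in>S. 1 - t * (1 - h * b) \<notin> p" by blast
    have b2: "\<forall>t\<in>S. 1 - t * (1 - h * b) \<notin> P"
    proof (intro ballI notI)
      fix t assume "t \<in> S" "1 - t * (1 - h * b) \<in> P"
      moreover have "1 - t * (1 - h * b) \<in> S" using subrD[OF S] subr01[OF S] \<open>t \<in> S\<close> hS b(1) by metis
      ultimately show False using b(2) unfolding p_def by blast
    qed
    define n0 where "n0 = 1 - h * b"
    have n0S: "n0 \<in> S" unfolding n0_def using subrD(3)[OF S subr01(2)[OF S] subrD(2)[OF S hS b(1)]] .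
    have cT: "c \<in> ?T" "b \<in> ?T" "g0 \<in> ?T" using TS cS b(1) g0(1) unfolding c_def by auto
    have cub: "c * u * b \<in> ?T" using subrD(2)[OF ST subrD(2)[OF ST cT(1) uT] cT(2)] .
    obtain t where t: "t \<in> ?T" "1 - t * (1 - f * (c * u * b)) \<in> P" using jac cub by blast
    have tcb: "t * c * b \<in> ?T" using subrD(2)[OF ST subrD(2)[OF ST t(1) cT(1)] cT(2)] .
    have "t * c * b * (g0 - u * f) \<in> P" using isidD(4)[OF I tcb] g0(4) F(2) unfolding u_def by simp
    then have "(1 - t * (1 - f * (c * u * b))) + t * c * b * (g0 - u * f) \<in> P" using isidD(3)[OF I t(2)] by blast
    moreover have "(1 - t * (1 - f * (c * u * b))) + t * c * b * (g0 - u * f) = 1 - t * n0"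
      unfolding n0_def h_def by (simp add: algebra_simps)
    ultimately have tn0: "1 - t * n0 \<in> P" by simp
    obtain Tt where Tt: "Tt \<in> SP S" "t = poly Tt x" using get_poly[OF t(1)] by blast
    define \<Psi> where "\<Psi> = smult n0 Tt - 1"
    have PsiS: "\<Psi> \<in> SP S" unfolding \<Psi>_def by (intro SP_closed[OF S] n0S Tt(1))
    have "poly \<Psi> x = - (1 - t * n0)" unfolding \<Psi>_def Tt(2) by (simp add: algebra_simps)
    then have PsiP: "poly \<Psi> x \<in> P" using isid_neg[OF ST I tn0] by simp
    obtain k Qd where kQ: "Qd \<in> SP S" "lowdeg P L (smult (c ^ k) \<Psi> - Qd * m)"
      using pdiv[OF S I m(1) _ PsiS, of L "Suc (degree \<Psi>)"] m(4) L isidD(2)[OF I]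
      unfolding c_def by (auto simp: lowdeg_def coeff_eq_0)
    define R where "R = smult (c ^ k) \<Psi> - Qd * m"
    have RS: "R \<in> SP S" unfolding R_def by (intro SP_closed[OF S] subr_pow[OF S cS[folded c_def]] PsiS kQ(1) m(1))
    have ckT: "c ^ k \<in> ?T" using subr_pow[OF ST cT(1)] .
    have "c ^ k * poly \<Psi> x \<in> P" "poly Qd x * poly m x \<in> P"
      using isidD(4)[OF I ckT PsiP] isidD(4)[OF I Tx_poly[OF kQ(1)] m(2)] by auto
    then have "poly R x \<in> P" unfolding R_def using isid_minus(1)[OF ST I] by simp
    then have R0: "lowdeg P 0 R" using minrel[OF RS _ kQ(2)[folded R_def]] by simp
    define a where "a = {y \<in> S. \<exists>s\<in>S. y - s * n0 \<in> P}"
    have aid: "isid S a" unfolding isid_def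
    proof (intro conjI ballI)
      show "a \<subseteq> S" unfolding a_def by blast
      show "0 \<in> a" unfolding a_def using subr01(1)[OF S] isidD(2)[OF I] by force
    next
      fix y z assume "y \<in> a" "z \<in> a"
      then obtain s1 s2 where h: "y \<in> S" "s1 \<in> S" "y - s1 * n0 \<in> P" "z \<in> S" "s2 \<in> S" "z - s2 * n0 \<in> P"
        unfolding a_def by blast
      have e: "(y + z) - (s1 + s2) * n0 = (y - s1 * n0) + (z - s2 * n0)" by (simp add: algebra_simps)
      have "(y - s1 * n0) + (z - s2 * n0) \<in> P" using isidD(3)[OF I h(3) h(6)] .
      then have "(y + z) - (s1 + s2) * n0 \<in> P" by (simp only: e)
      moreover have "y + z \<in> S" "s1 + s2 \<in> S" using subrD(1)[OF S] h by auto
      ultimately have "y + z \<in> S" "s1 + s2 \<in> S" "(y + z) - (s1 + s2) * n0 \<in> P" by auto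
      then show "y + z \<in> a" unfolding a_def by blast
    next
      fix s y assume "s \<in> S" "y \<in> a"
      then obtain s1 where "y \<in> S" "s1 \<in> S" "y - s1 * n0 \<in> P" unfolding a_def by blast
      moreover have "s * y - (s * s1) * n0 = s * (y - s1 * n0)" by (simp add: algebra_simps)
      moreover have "s \<in> ?T" using \<open>s \<in> S\<close> TS by blast
      ultimately have "s * y \<in> S" "s * s1 \<in> S" "s * y - (s * s1) * n0 \<in> P"
        using isidD(4)[OF I] subrD(2)[OF S] \<open>s \<in> S\<close> by auto
      then show "s * y \<in> a" unfolding a_def by blast
    qed
    have Qm: "coeff (Qd * m) i = c ^ k * (n0 * coeff Tt i - coeff 1 i) - coeff R i" for i
      unfolding R_def \<Psi>_def by simp
    have inA: "c ^ k * (n0 * coeff Tt i) - coeff R i \<in> a" for i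
    proof -
      have y: "c ^ k * (n0 * coeff Tt i) - coeff R i \<in> S"
        by (intro subrD[OF S] subr_pow[OF S] cS[folded c_def] n0S SP_coeff[OF Tt(1)] SP_coeff[OF RS])
      have s: "c ^ k * coeff Tt i \<in> S" by (intro subrD[OF S] subr_pow[OF S] cS[folded c_def] SP_coeff[OF Tt(1)])
      have "(c ^ k * (n0 * coeff Tt i) - coeff R i) - (c ^ k * coeff Tt i) * n0 = - coeff R i"
        by (simp add: algebra_simps)
      moreover have "- coeff R i \<in> P" using isid_neg[OF ST I] R0 unfolding lowdeg_def by blast
      ultimately have "(c ^ k * (n0 * coeff Tt i) - coeff R i) - (c ^ k * coeff Tt i) * n0 \<in> P" by simp
      then show ?thesis unfolding a_def using y s by blast
    qed
    have mA: "lowdeg a (Suc L) m" unfolding lowdeg_def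
    proof (intro allI impI)
      fix i assume "Suc L \<le> i"
      then have "coeff m i - 0 * n0 \<in> P" using m(4) L unfolding lowdeg_def by simp
      then show "coeff m i \<in> a" unfolding a_def using SP_coeff[OF m(1)] subr01(1)[OF S] by blast
    qed
    have "\<exists>j. coeff m L ^ j \<in> a"
    proof (rule nil_lemma[OF S aid m(1) mA L1 kQ(1), of k], goal_cases)
      case (1 i)
      then show ?case using inA[of i] unfolding Qm by (simp add: coeff_1)
    next
      case 2
      show ?case using inA[of 0] unfolding Qm c_def by (simp add: algebra_simps)
    qed
    then obtain j where j: "c ^ j \<in> a" unfolding c_def by blast
    from j obtain s where s: "s \<in> S" "c ^ j - s * n0 \<in> P" unfolding a_def by blast
    define w where "w = (\<Sum>i<j. (1 - n0) ^ i)"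
    have wS: "w \<in> S" unfolding w_def by (intro subr_sum[OF S] subr_pow[OF S] subrD(3)[OF S subr01(2)[OF S] n0S])
    have geo: "1 - (1 - n0) ^ j = n0 * w" unfolding w_def using one_diff_power_eq[of "1 - n0" j] by simp
    define v where "v = g0 * b"
    have vS: "v \<in> S" unfolding v_def using subrD(2)[OF S g0(1) b(1)] .
    have hb: "1 - n0 = c * v" unfolding n0_def h_def v_def by (simp add: algebra_simps)
    define t' where "t' = w + s * v ^ j"
    have t'S: "t' \<in> S" unfolding t'_def by (intro subrD[OF S] wS s(1) subr_pow[OF S vS])
    have "1 - t' * n0 = (1 - n0 * w) - s * n0 * v ^ j" unfolding t'_def by (simp add: algebra_simps)
    also have "\<dots> = (c * v) ^ j - s * n0 * v ^ j" by (simp add: geo[symmetric] hb[symmetric])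
    also have "\<dots> = v ^ j * (c ^ j - s * n0)" by (simp add: algebra_simps power_mult_distrib)
    finally have "1 - t' * n0 \<in> P" using isidD(4)[OF I _ s(2)] subr_pow[OF S vS] TS by auto
    then show False using b2 t'S unfolding n0_def by blast
  qed
qed


lemma ideal_plus:
  assumes T: "subr T" and M: "isid T M" and y: "y \<in> T"
  shows "isid T {m + t * y | m t. m \<in> M \<and> t \<in> T}" (is "isid T ?J")
  unfolding isid_def
proof (intro conjI ballI)
  show "?J \<subseteq> T" using isidD(1)[OF M] subrD[OF T] y by blast
  show "0 \<in> ?J" using isidD(2)[OF M] subr01(1)[OF T] by force
next
  fix u v assume "u \<in> ?J" "v \<in> ?J"
  then obtain m1 t1 m2 t2 where h: "u = m1 + t1 * y" "m1 \<in> M" "t1 \<in> T" "v = m2 + t2 * y" "m2 \<in> M" "t2 \<in> T" by blast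
  have "u + v = (m1 + m2) + (t1 + t2) * y" using h by (simp add: algebra_simps)
  moreover have "m1 + m2 \<in> M" "t1 + t2 \<in> T" using isidD(3)[OF M] subrD(1)[OF T] h by auto
  ultimately show "u + v \<in> ?J" by blast
next
  fix s u assume "s \<in> T" "u \<in> ?J"
  then obtain m1 t1 where h: "u = m1 + t1 * y" "m1 \<in> M" "t1 \<in> T" by blast
  have "s * u = s * m1 + (s * t1) * y" using h by (simp add: algebra_simps)
  moreover have "s * m1 \<in> M" "s * t1 \<in> T" using isidD(4)[OF M] subrD(2)[OF T] h \<open>s \<in> T\<close> by auto
  ultimately show "s * u \<in> ?J" by blast
qed

lemma JAC_step:
  assumes S: "subr S" and J: "JAC S"
  shows "JAC (Tx S x)"
  unfolding JAC_def
proof (intro allI impI)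
  let ?T = "Tx S x"
  have ST: "subr ?T" using Tx_subr[OF S] .
  fix I a assume A: "isid ?T I \<and> a \<in> ?T \<and> (\<forall>b\<in>?T. \<exists>t\<in>?T. 1 - t * (1 - a * b) \<in> I)"
  then have I: "isid ?T I" and a: "a \<in> ?T" and jI: "\<forall>b\<in>?T. \<exists>t\<in>?T. 1 - t * (1 - a * b) \<in> I" by auto
  show "\<exists>k. a ^ k \<in> I"
  proof (rule ccontr)
    assume na: "\<not> (\<exists>k. a ^ k \<in> I)"
    define \<A> where "\<A> = {J. isid ?T J \<and> I \<subseteq> J \<and> (\<forall>k. a ^ k \<notin> J)}"
    have "\<exists>M\<in>\<A>. \<forall>X\<in>\<A>. M \<subseteq> X \<longrightarrow> X = M"
    proof (rule Zorn_Lemma2, intro ballI)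
      fix C assume C: "C \<in> chains \<A>"
      show "\<exists>U\<in>\<A>. \<forall>X\<in>C. X \<subseteq> U"
      proof (cases "C = {}")
        case True
        then show ?thesis using I na unfolding \<A>_def by blast
      next
        case False
        have CA: "C \<subseteq> \<A>" and ch: "\<And>X Y. X \<in> C \<Longrightarrow> Y \<in> C \<Longrightarrow> X \<subseteq> Y \<or> Y \<subseteq> X"
          using C unfolding chains_def chain_subset_def by blast+
        have CX: "isid ?T X" "I \<subseteq> X" "\<And>k. a ^ k \<notin> X" if "X \<in> C" for X
          using CA that unfolding \<A>_def by auto
        have "isid ?T (\<Union>C)" unfolding isid_def
        proof (intro conjI ballI)
          show "\<Union>C \<subseteq> ?T" using isidD(1)[OF CX(1)] by blast
          obtain X where "X \<in> C" using False by blast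
          then show "0 \<in> \<Union>C" using isidD(2)[OF CX(1)] by blast
        next
          fix u v assume "u \<in> \<Union>C" "v \<in> \<Union>C"
          then obtain X Y where XY: "X \<in> C" "Y \<in> C" "u \<in> X" "v \<in> Y" by blast
          show "u + v \<in> \<Union>C"
          proof (cases "X \<subseteq> Y")
            case True
            then have "u + v \<in> Y" using isidD(3)[OF CX(1)[OF XY(2)]] XY by blast
            then show ?thesis using XY by blast
          next
            case False
            then have "Y \<subseteq> X" using ch XY by blast
            then have "u + v \<in> X" using isidD(3)[OF CX(1)[OF XY(1)]] XY by blast
            then show ?thesis using XY by blast
          qed
        next
          fix s u assume "s \<in> ?T" "u \<in> \<Union>C"
          then obtain X where "X \<in> C" "u \<in> X" by blast
          then have "s * u \<in> X" using isidD(4)[OF CX(1)[OF \<open>X \<in> C\<close>] \<open>s \<in> ?T\<close>] by blast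
          then show "s * u \<in> \<Union>C" using \<open>X \<in> C\<close> by blast
        qed
        moreover have "I \<subseteq> \<Union>C" using False CX(2) by blast
        moreover have "\<forall>k. a ^ k \<notin> \<Union>C" using CX(3) by blast
        ultimately have "\<Union>C \<in> \<A>" unfolding \<A>_def by blast
        then show ?thesis by blast
      qed
    qed
    then obtain M where M: "M \<in> \<A>" "\<And>X. X \<in> \<A> \<Longrightarrow> M \<subseteq> X \<Longrightarrow> X = M" by blast
    have Mi: "isid ?T M" "I \<subseteq> M" "\<And>k. a ^ k \<notin> M" using M(1) unfolding \<A>_def by auto
    have grow: "\<exists>i. a ^ i \<in> {m + t * y | m t. m \<in> M \<and> t \<in> ?T}" if y: "y \<in> ?T" "y \<notin> M" for y
    proof (rule ccontr)
      let ?J = "{m + t * y | m t. m \<in> M \<and> t \<in> ?T}"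
      assume "\<not> (\<exists>i. a ^ i \<in> ?J)"
      moreover have "isid ?T ?J" using ideal_plus[OF ST Mi(1) y(1)] .
      moreover have "M \<subseteq> ?J"
      proof
        fix m assume "m \<in> M" then show "m \<in> ?J" using subr01(1)[OF ST] by force
      qed
      ultimately have "?J \<in> \<A>" using Mi(2) unfolding \<A>_def by blast
      then have "?J = M" using M(2) \<open>M \<subseteq> ?J\<close> by blast
      moreover have "y \<in> ?J" using isidD(2)[OF Mi(1)] subr01(2)[OF ST] by force
      ultimately show False using y(2) by blast
    qed
    have P: "primeid ?T M" unfolding primeid_def
    proof (intro conjI ballI impI)
      show "isid ?T M" using Mi(1) .
      show "1 \<notin> M" using Mi(3)[of 0] by simp
    next
      fix y z assume yz: "y \<in> ?T" "z \<in> ?T" "y * z \<in> M"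
      show "y \<in> M \<or> z \<in> M"
      proof (rule ccontr)
        assume "\<not> (y \<in> M \<or> z \<in> M)"
        then obtain i j m1 t1 m2 t2 where h: "a ^ i = m1 + t1 * y" "m1 \<in> M" "t1 \<in> ?T"
          "a ^ j = m2 + t2 * z" "m2 \<in> M" "t2 \<in> ?T"
          using grow[OF yz(1)] grow[OF yz(2)] by blast
        have "a ^ (i + j) = m1 * (m2 + t2 * z) + m2 * (t1 * y) + (t1 * t2) * (y * z)"
          unfolding power_add h by (simp add: algebra_simps)
        moreover have "m1 * (m2 + t2 * z) \<in> M" using isidD(5)[OF Mi(1) subrD(1)[OF ST subsetD[OF isidD(1)[OF Mi(1)] h(5)] subrD(2)[OF ST h(6) yz(2)]] h(2)] .
        moreover have "m2 * (t1 * y) \<in> M" using isidD(5)[OF Mi(1) subrD(2)[OF ST h(3) yz(1)] h(5)] .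
        moreover have "(t1 * t2) * (y * z) \<in> M" using isidD(4)[OF Mi(1) subrD(2)[OF ST h(3) h(6)] yz(3)] .
        ultimately have "a ^ (i + j) \<in> M" using isidD(3)[OF Mi(1)] by presburger
        then show False using Mi(3) by blast
      qed
    qed
    have aM: "a \<notin> M" using Mi(3)[of 1] by simp
    have "\<forall>b\<in>?T. \<exists>t\<in>?T. 1 - t * (1 - a * b) \<in> M" using jI Mi(2) by blast
    then show False using prime_case[OF S J P a aM] by blast
  qed
qed


lemma ideal_gen_isid:
  assumes S: "subr S" and U: "U \<subseteq> S"
  shows "isid S (ideal_gen S U)"
  unfolding isid_def
proof (intro conjI ballI)
  show "ideal_gen S U \<subseteq> S"
  proof
    fix y assume "y \<in> ideal_gen S U"
    then obtain F c where h: "finite F" "F \<subseteq> U" "\<forall>u\<in>F. c u \<in> S" "y = (\<Sum>u\<in>F. c u * u)"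
      unfolding ideal_gen_def by blast
    have "c u * u \<in> S" if "u \<in> F" for u
    proof -
      have "c u \<in> S" using h(3) that by blast
      moreover have "u \<in> S" using h(2) U that by blast
      ultimately show ?thesis by (rule subrD(2)[OF S])
    qed
    then show "y \<in> S" unfolding h(4) by (rule subr_sum[OF S])
  qed
  show "0 \<in> ideal_gen S U" unfolding ideal_gen_def by (rule CollectI, rule exI[of _ "{}"]) simp
next
  fix y z assume "y \<in> ideal_gen S U" "z \<in> ideal_gen S U"
  then obtain F1 c1 F2 c2 where h: "finite F1" "F1 \<subseteq> U" "\<forall>u\<in>F1. c1 u \<in> S" "y = (\<Sum>u\<in>F1. c1 u * u)"
    "finite F2" "F2 \<subseteq> U" "\<forall>u\<in>F2. c2 u \<in> S" "z = (\<Sum>u\<in>F2. c2 u * u)"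
    unfolding ideal_gen_def by blast
  define d1 where "d1 u = (if u \<in> F1 then c1 u else 0)" for u
  define d2 where "d2 u = (if u \<in> F2 then c2 u else 0)" for u
  have e1: "y = (\<Sum>u\<in>F1 \<union> F2. d1 u * u)"
  proof -
    have "(\<Sum>u\<in>F1. d1 u * u) = (\<Sum>u\<in>F1 \<union> F2. d1 u * u)"
      by (rule sum.mono_neutral_left) (use h in \<open>auto simp: d1_def\<close>)
    moreover have "(\<Sum>u\<in>F1. d1 u * u) = y" unfolding h(4) d1_def by (rule sum.cong) auto
    ultimately show ?thesis by simp
  qed
  have e2: "z = (\<Sum>u\<in>F1 \<union> F2. d2 u * u)"
  proof -
    have "(\<Sum>u\<in>F2. d2 u * u) = (\<Sum>u\<in>F1 \<union> F2. d2 u * u)"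
      by (rule sum.mono_neutral_left) (use h in \<open>auto simp: d2_def\<close>)
    moreover have "(\<Sum>u\<in>F2. d2 u * u) = z" unfolding h(8) d2_def by (rule sum.cong) auto
    ultimately show ?thesis by simp
  qed
  have "y + z = (\<Sum>u\<in>F1 \<union> F2. (d1 u + d2 u) * u)" unfolding e1 e2 by (simp add: sum.distrib algebra_simps)
  moreover have "\<forall>u\<in>F1 \<union> F2. d1 u + d2 u \<in> S"
  proof
    fix u assume "u \<in> F1 \<union> F2"
    have "d1 u \<in> S" unfolding d1_def using h(3) subr01(1)[OF S] by simp
    moreover have "d2 u \<in> S" unfolding d2_def using h(7) subr01(1)[OF S] by simp
    ultimately show "d1 u + d2 u \<in> S" by (rule subrD(1)[OF S])
  qed
  moreover have "finite (F1 \<union> F2)" "F1 \<union> F2 \<subseteq> U" using h by auto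
  ultimately show "y + z \<in> ideal_gen S U" unfolding ideal_gen_def
    by (intro CollectI exI[of _ "F1 \<union> F2"] exI[of _ "\<lambda>u. d1 u + d2 u"] conjI)
next
  fix s y assume "s \<in> S" "y \<in> ideal_gen S U"
  then obtain F c where h: "finite F" "F \<subseteq> U" "\<forall>u\<in>F. c u \<in> S" "y = (\<Sum>u\<in>F. c u * u)"
    unfolding ideal_gen_def by blast
  have "s * y = (\<Sum>u\<in>F. (s * c u) * u)" unfolding h(4) by (simp add: sum_distrib_left algebra_simps)
  moreover have "\<forall>u\<in>F. s * c u \<in> S" using h(3) subrD(2)[OF S \<open>s \<in> S\<close>] by blast
  ultimately show "s * y \<in> ideal_gen S U" unfolding ideal_gen_def
    by (intro CollectI exI[of _ F] exI[of _ "\<lambda>u. s * c u"] conjI h(1) h(2))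
qed

lemma ideal_gen_base: "subr S \<Longrightarrow> u \<in> U \<Longrightarrow> u \<in> ideal_gen S U"
  unfolding ideal_gen_def
  by (rule CollectI, rule exI[of _ "{u}"], rule exI[of _ "\<lambda>_. 1"]) (simp add: subr01)

lemma ideal_gen_sub: "isid S I \<Longrightarrow> ideal_gen S I \<subseteq> I"
proof
  fix y assume I: "isid S I" and "y \<in> ideal_gen S I"
  then obtain F c where h: "finite F" "F \<subseteq> I" "\<forall>u\<in>F. c u \<in> S" "y = (\<Sum>u\<in>F. c u * u)"
    unfolding ideal_gen_def by blast
  show "y \<in> I" unfolding h(4) by (rule isid_sum[OF I], rule isidD(4)[OF I]) (use h in auto)
qed

lemma ideal_gen_mono: "U \<subseteq> V \<Longrightarrow> ideal_gen S U \<subseteq> ideal_gen S V"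
  unfolding ideal_gen_def by blast

lemma jac_extract:
  assumes S: "subr S" and I: "isid S I" and v: "v \<in> S" and one: "1 \<in> ideal_gen S (I \<union> {v})"
  shows "\<exists>t\<in>S. 1 - t * v \<in> I"
proof -
  obtain F c where h: "finite F" "F \<subseteq> I \<union> {v}" "\<forall>u\<in>F. c u \<in> S" "1 = (\<Sum>u\<in>F. c u * u)"
    using one unfolding ideal_gen_def by blast
  have rest: "(\<Sum>u\<in>F - {v}. c u * u) \<in> I"
    by (rule isid_sum[OF I], rule isidD(4)[OF I]) (use h in auto)
  show ?thesis
  proof (cases "v \<in> F")
    case True
    have "1 = c v * v + (\<Sum>u\<in>F - {v}. c u * u)" unfolding h(4) using True h(1) by (simp add: sum.remove)
    then have "1 - c v * v = (\<Sum>u\<in>F - {v}. c u * u)" by (simp add: algebra_simps)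
    then have "1 - c v * v \<in> I" using rest by simp
    moreover have "c v \<in> S" using h(3) True by blast
    ultimately show ?thesis by blast
  next
    case False
    then have "1 = (\<Sum>u\<in>F - {v}. c u * u)" unfolding h(4) by simp
    then show ?thesis using rest subr01(1)[OF S] by (intro bexI[of _ 0]) auto
  qed
qed

lemma JAC_fin:
  assumes S: "subr S" and J: "JAC S"
  shows "fin_jacobson S"
  unfolding fin_jacobson_def
proof (intro allI impI subsetI)
  fix I a assume fg: "fg_ideal S I" and a: "a \<in> jac_rad S I"
  obtain F where F: "finite F" "F \<subseteq> S" "I = ideal_gen S F" using fg unfolding fg_ideal_def by blast
  have I: "isid S I" using ideal_gen_isid[OF S F(2)] F(3) by simp
  have aS: "a \<in> S" using a unfolding jac_rad_def by blast
  have "\<forall>b\<in>S. \<exists>t\<in>S. 1 - t * (1 - a * b) \<in> I"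
  proof
    fix b assume b: "b \<in> S"
    have v: "1 - a * b \<in> S" using subrD[OF S] subr01[OF S] aS b by metis
    have "1 \<in> ideal_gen S (I \<union> {1 - a * b})" using a b unfolding jac_rad_def by blast
    then show "\<exists>t\<in>S. 1 - t * (1 - a * b) \<in> I" using jac_extract[OF S I v] by blast
  qed
  then obtain k where "a ^ k \<in> I" using J I aS unfolding JAC_def by blast
  then have "a ^ k \<in> ideal_gen S I" using ideal_gen_base[OF S] by blast
  then show "a \<in> nil_rad S I" unfolding nil_rad_def using aS by blast
qed

lemma subr_UNIV: "subr UNIV"
  unfolding subr_def by simp

lemma noeth_fg:
  assumes N: "noetherian (UNIV :: 'a::comm_ring_1 set)" and I: "isid UNIV (I :: 'a set)"
  shows "fg_ideal UNIV I"
proof (rule ccontr)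
  assume nfg: "\<not> fg_ideal UNIV I"
  have step: "\<exists>y. y \<in> I \<and> y \<notin> ideal_gen UNIV F" if "finite F" "F \<subseteq> I" for F
  proof (rule ccontr)
    assume "\<not> (\<exists>y. y \<in> I \<and> y \<notin> ideal_gen UNIV F)"
    then have "I \<subseteq> ideal_gen UNIV F" by blast
    moreover have "ideal_gen UNIV F \<subseteq> I" using ideal_gen_mono[OF that(2)] ideal_gen_sub[OF I] by blast
    ultimately have "I = ideal_gen UNIV F" by blast
    then show False using nfg that(1) unfolding fg_ideal_def by blast
  qed
  define nxt where "nxt F = insert (SOME y. y \<in> I \<and> y \<notin> ideal_gen UNIV F) F" for F
  define Fs where "Fs k = (nxt ^^ k) {}" for k
  have inv: "finite (Fs k) \<and> Fs k \<subseteq> I" for k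
  proof (induction k)
    case 0 then show ?case unfolding Fs_def by simp
  next
    case (Suc k)
    have "Fs (Suc k) = nxt (Fs k)" unfolding Fs_def by simp
    moreover have "(SOME y. y \<in> I \<and> y \<notin> ideal_gen UNIV (Fs k)) \<in> I"
      using someI_ex[OF step[of "Fs k"]] Suc by blast
    ultimately show ?case using Suc unfolding nxt_def by simp
  qed
  define Js where "Js k = ideal_gen UNIV (Fs k)" for k
  have "\<forall>k. fg_ideal UNIV (Js k)" unfolding Js_def fg_ideal_def using inv by blast
  moreover have "\<forall>k. Js k \<subseteq> Js (Suc k)" unfolding Js_def Fs_def nxt_def
    by (auto intro: ideal_gen_mono[THEN subsetD, rotated])
  ultimately obtain k where k: "Js k = Js (Suc k)" using N unfolding noetherian_def by blast
  define y where "y = (SOME y. y \<in> I \<and> y \<notin> ideal_gen UNIV (Fs k))"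
  have y1: "y \<notin> Js k" using someI_ex[OF step[of "Fs k"]] inv unfolding y_def Js_def by blast
  have "y \<in> Fs (Suc k)" unfolding Fs_def y_def nxt_def by simp
  then have "y \<in> Js (Suc k)" unfolding Js_def using ideal_gen_base[OF subr_UNIV] by blast
  then show False using y1 k by simp
qed

lemma JAC_UNIV:
  assumes N: "noetherian (UNIV :: 'a::comm_ring_1 set)" and FJ: "fin_jacobson (UNIV :: 'a set)"
  shows "JAC (UNIV :: 'a set)"
  unfolding JAC_def
proof (intro allI impI)
  fix I :: "'a set" and a assume A: "isid UNIV I \<and> a \<in> UNIV \<and> (\<forall>b\<in>UNIV. \<exists>t\<in>UNIV. 1 - t * (1 - a * b) \<in> I)"
  then have I: "isid UNIV I" and jI: "\<And>b. \<exists>t. 1 - t * (1 - a * b) \<in> I" by auto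
  have "a \<in> jac_rad UNIV I" unfolding jac_rad_def
  proof (intro CollectI conjI ballI)
    fix b :: 'a
    obtain t where t: "1 - t * (1 - a * b) \<in> I" using jI by blast
    let ?G = "ideal_gen UNIV (I \<union> {1 - a * b})"
    have G: "isid UNIV ?G" using ideal_gen_isid[OF subr_UNIV] by blast
    have "1 - t * (1 - a * b) \<in> ?G" using ideal_gen_base[OF subr_UNIV, of _ "I \<union> {1 - a * b}"] t by blast
    moreover have "t * (1 - a * b) \<in> ?G" using isidD(4)[OF G _ ideal_gen_base[OF subr_UNIV]] by blast
    ultimately have "(1 - t * (1 - a * b)) + t * (1 - a * b) \<in> ?G" using isidD(3)[OF G] by blast
    then show "1 \<in> ?G" by simp
  qed simp
  then have "a \<in> nil_rad UNIV I" using FJ noeth_fg[OF N I] unfolding fin_jacobson_def by blast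
  then obtain n where "a ^ n \<in> ideal_gen UNIV I" unfolding nil_rad_def by blast
  then show "\<exists>k. a ^ k \<in> I" using ideal_gen_sub[OF I] by blast
qed




lemma keys_mon_add: "i \<in> Poly_Mapping.keys ((a::(nat, nat) poly_mapping) + b) \<Longrightarrow> i \<in> Poly_Mapping.keys a \<or> i \<in> Poly_Mapping.keys b"
  using keys_add[of a b] by blast

lemma mpolys_I: "(\<And>mon i. mon \<in> Poly_Mapping.keys p \<Longrightarrow> i \<in> Poly_Mapping.keys mon \<Longrightarrow> i < n) \<Longrightarrow> p \<in> mpolys n"
  unfolding mpolys_def by blast

lemma mpolys_D: "p \<in> mpolys n \<Longrightarrow> mon \<in> Poly_Mapping.keys p \<Longrightarrow> i \<in> Poly_Mapping.keys mon \<Longrightarrow> i < n"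
  unfolding mpolys_def by blast

lemma mpolys_subr: "subr (mpolys n :: (((nat, nat) poly_mapping, 'a::comm_ring_1) poly_mapping) set)"
  unfolding subr_def
proof (intro conjI ballI)
  show "0 \<in> (mpolys n :: (((nat, nat) poly_mapping, 'a) poly_mapping) set)" unfolding mpolys_def by simp
  show "1 \<in> (mpolys n :: (((nat, nat) poly_mapping, 'a) poly_mapping) set)" unfolding mpolys_def by simp
next
  fix p q :: "((nat, nat) poly_mapping, 'a) poly_mapping"
  assume p: "p \<in> mpolys n" and q: "q \<in> mpolys n"
  show "p + q \<in> mpolys n"
  proof (rule mpolys_I)
    fix mon i assume "mon \<in> Poly_Mapping.keys (p + q)" "i \<in> Poly_Mapping.keys mon"
    then have "mon \<in> Poly_Mapping.keys p \<or> mon \<in> Poly_Mapping.keys q" using keys_add[of p q] by blast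
    then show "i < n" using mpolys_D[OF p] mpolys_D[OF q] \<open>i \<in> Poly_Mapping.keys mon\<close> by blast
  qed
  show "p - q \<in> mpolys n"
  proof (rule mpolys_I)
    fix mon i assume "mon \<in> Poly_Mapping.keys (p - q)" "i \<in> Poly_Mapping.keys mon"
    then have "mon \<in> Poly_Mapping.keys p \<or> mon \<in> Poly_Mapping.keys q" using keys_diff[of p q] by blast
    then show "i < n" using mpolys_D[OF p] mpolys_D[OF q] \<open>i \<in> Poly_Mapping.keys mon\<close> by blast
  qed
  show "p * q \<in> mpolys n"
  proof (rule mpolys_I)
    fix mon i assume mon: "mon \<in> Poly_Mapping.keys (p * q)" and i: "i \<in> Poly_Mapping.keys mon"
    obtain a b where ab: "mon = a + b" "a \<in> Poly_Mapping.keys p" "b \<in> Poly_Mapping.keys q"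
      using keys_mult[of p q] mon by blast
    have "i \<in> Poly_Mapping.keys a \<or> i \<in> Poly_Mapping.keys b" using keys_mon_add i ab(1) by blast
    then show "i < n" using mpolys_D[OF p ab(2)] mpolys_D[OF q ab(3)] by blast
  qed
qed

lemma mpolys_mono: "m \<le> n \<Longrightarrow> mpolys m \<subseteq> mpolys n"
  by (auto intro!: mpolys_I dest: mpolys_D)

definition Xv :: "nat \<Rightarrow> ((nat, nat) poly_mapping, 'a::comm_ring_1) poly_mapping" where
  "Xv n = Poly_Mapping.single (Poly_Mapping.single n 1) 1"

lemma Xv_in: "Xv n \<in> mpolys (Suc n)"
  unfolding Xv_def mpolys_def by simp

lemma Xv_pow: "Xv n ^ k = Poly_Mapping.single (Poly_Mapping.single n k) (1::'a::comm_ring_1)"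
proof (induction k)
  case 0 then show ?case unfolding Xv_def by simp
next
  case (Suc k)
  have "Xv n ^ Suc k = Xv n * Xv n ^ k" by simp
  also have "\<dots> = Poly_Mapping.single (Poly_Mapping.single n 1) (1::'a) * Poly_Mapping.single (Poly_Mapping.single n k) 1"
    unfolding Suc.IH unfolding Xv_def ..
  also have "\<dots> = Poly_Mapping.single (Poly_Mapping.single n 1 + Poly_Mapping.single n k) (1::'a)"
    by (simp only: mult_single mult_1)
  also have "Poly_Mapping.single n 1 + Poly_Mapping.single n k = Poly_Mapping.single n (Suc k)"
    by (simp add: single_add[symmetric])
  finally show ?case .
qed

lemma pm_decomp: "p = (\<Sum>mon\<in>Poly_Mapping.keys p. Poly_Mapping.single mon (Poly_Mapping.lookup p mon))"
proof (rule poly_mapping_eqI)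
  fix k
  have "Poly_Mapping.lookup (\<Sum>mon\<in>Poly_Mapping.keys p. Poly_Mapping.single mon (Poly_Mapping.lookup p mon)) k
      = (\<Sum>mon\<in>Poly_Mapping.keys p. Poly_Mapping.lookup (Poly_Mapping.single mon (Poly_Mapping.lookup p mon)) k)"
    by (rule lookup_sum)
  also have "\<dots> = (\<Sum>mon\<in>Poly_Mapping.keys p. if mon = k then Poly_Mapping.lookup p mon else 0)"
    by (rule sum.cong) (auto simp: lookup_single when_def)
  also have "\<dots> = Poly_Mapping.lookup p k"
    by (simp add: sum.delta in_keys_iff)
  finally show "Poly_Mapping.lookup p k = Poly_Mapping.lookup (\<Sum>mon\<in>Poly_Mapping.keys p. Poly_Mapping.single mon (Poly_Mapping.lookup p mon)) k"
    by simp
qed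

lemma mon_split:
  fixes mon :: "(nat, nat) poly_mapping"
  shows "mon = (mon - Poly_Mapping.single n (Poly_Mapping.lookup mon n)) + Poly_Mapping.single n (Poly_Mapping.lookup mon n)"
  by (rule poly_mapping_eqI) (simp add: lookup_add lookup_minus lookup_single when_def)

lemma mon_split_keys:
  fixes mon :: "(nat, nat) poly_mapping"
  assumes "\<forall>i\<in>Poly_Mapping.keys mon. i < Suc n"
  shows "\<forall>i\<in>Poly_Mapping.keys (mon - Poly_Mapping.single n (Poly_Mapping.lookup mon n)). i < n"
proof
  fix i assume i: "i \<in> Poly_Mapping.keys (mon - Poly_Mapping.single n (Poly_Mapping.lookup mon n))"
  then have l: "Poly_Mapping.lookup mon i - Poly_Mapping.lookup (Poly_Mapping.single n (Poly_Mapping.lookup mon n)) i \<noteq> 0"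
    by (simp add: in_keys_iff lookup_minus)
  then have "i \<noteq> n" by (auto simp: lookup_single)
  moreover have "i \<in> Poly_Mapping.keys mon" using l by (auto simp: in_keys_iff)
  ultimately show "i < n" using assms by force
qed

lemma mpolys_Suc: "mpolys (Suc n) = Tx (mpolys n :: (((nat, nat) poly_mapping, 'a::comm_ring_1) poly_mapping) set) (Xv n)"
proof
  let ?S = "mpolys n :: (((nat, nat) poly_mapping, 'a) poly_mapping) set"
  let ?T = "Tx ?S (Xv n)"
  have S: "subr ?S" by (rule mpolys_subr)
  have T: "subr ?T" using Tx_subr[OF S] .
  show "?T \<subseteq> mpolys (Suc n)"
  proof
    fix y assume "y \<in> ?T"
    then obtain \<phi> where \<phi>: "\<phi> \<in> SP ?S" "y = poly \<phi> (Xv n)" using get_poly by blast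
    have "poly \<phi> (Xv n) = (\<Sum>i\<le>degree \<phi>. coeff \<phi> i * Xv n ^ i)" by (rule poly_altdef)
    also have "\<dots> \<in> mpolys (Suc n)"
    proof (rule subr_sum[OF mpolys_subr])
      fix i
      have "coeff \<phi> i \<in> mpolys (Suc n)" using SP_coeff[OF \<phi>(1)] mpolys_mono[of n "Suc n"] by auto
      moreover have "Xv n ^ i \<in> mpolys (Suc n)" using subr_pow[OF mpolys_subr Xv_in] .
      ultimately show "coeff \<phi> i * Xv n ^ i \<in> mpolys (Suc n)" by (rule subrD(2)[OF mpolys_subr])
    qed
    finally show "y \<in> mpolys (Suc n)" using \<phi>(2) by simp
  qed
  show "mpolys (Suc n) \<subseteq> ?T"
  proof
    fix p :: "((nat, nat) poly_mapping, 'a) poly_mapping" assume p: "p \<in> mpolys (Suc n)"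
    have "(\<Sum>mon\<in>Poly_Mapping.keys p. Poly_Mapping.single mon (Poly_Mapping.lookup p mon)) \<in> ?T"
    proof (rule subr_sum[OF T])
      fix mon assume mon: "mon \<in> Poly_Mapping.keys p"
      define k where "k = Poly_Mapping.lookup mon n"
      define mon' where "mon' = mon - Poly_Mapping.single n k"
      have km: "\<forall>i\<in>Poly_Mapping.keys mon. i < Suc n" using p mon unfolding mpolys_def by blast
      have k': "\<forall>i\<in>Poly_Mapping.keys mon'. i < n" using mon_split_keys[OF km] unfolding mon'_def k_def .
      have "Poly_Mapping.single mon (Poly_Mapping.lookup p mon)
          = Poly_Mapping.single mon' (Poly_Mapping.lookup p mon) * Xv n ^ k"
        unfolding Xv_pow mult_single using mon_split[of mon n] unfolding mon'_def k_def by simp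
      moreover have "Poly_Mapping.single mon' (Poly_Mapping.lookup p mon) \<in> ?S"
        unfolding mpolys_def using k' by simp
      then have "Poly_Mapping.single mon' (Poly_Mapping.lookup p mon) \<in> ?T" using Tx_sub[OF S] by blast
      moreover have "Xv n ^ k \<in> ?T" using subr_pow[OF T Tx_x[OF S]] .
      ultimately show "Poly_Mapping.single mon (Poly_Mapping.lookup p mon) \<in> ?T"
        using subrD(2)[OF T] by simp
    qed
    then show "p \<in> ?T" using pm_decomp[of p] by simp
  qed
qed


lemma mpolys0_eq:
  assumes p: "p \<in> mpolys 0"
  shows "p = Poly_Mapping.single 0 (Poly_Mapping.lookup p 0)"
proof (rule poly_mapping_eqI)
  fix k :: "(nat, nat) poly_mapping"
  show "Poly_Mapping.lookup p k = Poly_Mapping.lookup (Poly_Mapping.single 0 (Poly_Mapping.lookup p 0)) k"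
  proof (cases "k = 0")
    case True then show ?thesis by simp
  next
    case False
    have "k \<notin> Poly_Mapping.keys p"
    proof
      assume k: "k \<in> Poly_Mapping.keys p"
      have "Poly_Mapping.keys k = {}" using mpolys_D[OF p k] by blast
      then show False using False by simp
    qed
    then show ?thesis using False by (simp add: in_keys_iff lookup_single_not_eq[of 0 k])
  qed
qed

lemma single0_in: "Poly_Mapping.single 0 a \<in> mpolys 0"
  by (rule mpolys_I) (simp split: if_splits)

lemma s0_mult: "Poly_Mapping.single (0::(nat, nat) poly_mapping) ((a::'a::comm_ring_1) * b) = Poly_Mapping.single 0 a * Poly_Mapping.single 0 b"
  by (simp add: mult_single)

lemma s0_pow: "Poly_Mapping.single (0::(nat, nat) poly_mapping) ((a::'a::comm_ring_1) ^ k) = Poly_Mapping.single 0 a ^ k"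
  by (induction k) (simp_all add: s0_mult)

lemma JAC0:
  assumes J: "JAC (UNIV :: 'a::comm_ring_1 set)"
  shows "JAC (mpolys 0 :: (((nat, nat) poly_mapping, 'a) poly_mapping) set)"
  unfolding JAC_def
proof (intro allI impI)
  let ?C = "mpolys 0 :: (((nat, nat) poly_mapping, 'a) poly_mapping) set"
  let ?f = "\<lambda>r::'a. Poly_Mapping.single (0::(nat, nat) poly_mapping) r"
  fix I a assume A: "isid ?C I \<and> a \<in> ?C \<and> (\<forall>b\<in>?C. \<exists>t\<in>?C. 1 - t * (1 - a * b) \<in> I)"
  then have I: "isid ?C I" and a: "a \<in> ?C" and jI: "\<forall>b\<in>?C. \<exists>t\<in>?C. 1 - t * (1 - a * b) \<in> I" by auto
  define I' where "I' = {r. ?f r \<in> I}"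
  have I': "isid UNIV I'" unfolding isid_def I'_def
  proof (intro conjI ballI)
    show "0 \<in> {r. ?f r \<in> I}" using isidD(2)[OF I] by simp
  next
    fix y z assume "y \<in> {r. ?f r \<in> I}" "z \<in> {r. ?f r \<in> I}"
    then show "y + z \<in> {r. ?f r \<in> I}" using isidD(3)[OF I] by (simp add: single_add)
  next
    fix s y assume "y \<in> {r. ?f r \<in> I}"
    then show "s * y \<in> {r. ?f r \<in> I}" using isidD(4)[OF I single0_in] by (simp add: s0_mult)
  qed simp
  define a0 where "a0 = Poly_Mapping.lookup a 0"
  have a0: "a = ?f a0" unfolding a0_def by (rule mpolys0_eq[OF a])
  have "\<forall>b\<in>UNIV. \<exists>t\<in>UNIV. 1 - t * (1 - a0 * b) \<in> I'"
  proof
    fix b :: 'a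
    obtain t where t: "t \<in> ?C" "1 - t * (1 - a * ?f b) \<in> I" using jI single0_in by blast
    define t0 where "t0 = Poly_Mapping.lookup t 0"
    have t0: "t = ?f t0" unfolding t0_def by (rule mpolys0_eq[OF t(1)])
    have "?f (1 - t0 * (1 - a0 * b)) = 1 - t * (1 - a * ?f b)"
      unfolding a0 t0 by (simp add: single_diff s0_mult)
    then have "1 - t0 * (1 - a0 * b) \<in> I'" using t(2) unfolding I'_def by simp
    then show "\<exists>t\<in>UNIV. 1 - t * (1 - a0 * b) \<in> I'" by blast
  qed
  then obtain k where "a0 ^ k \<in> I'" using J I' unfolding JAC_def by blast
  then have "?f (a0 ^ k) \<in> I" unfolding I'_def by simp
  then show "\<exists>k. a ^ k \<in> I" unfolding a0 s0_pow by blast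
qed

theorem mainTheorem5:
  assumes "coherent (UNIV :: 'a::comm_ring_1 set)"
    and "noetherian (UNIV :: 'a set)"
    and "fin_jacobson (UNIV :: 'a set)"
  shows "fin_jacobson (mpolys n :: (((nat, nat) poly_mapping, 'a) poly_mapping) set)"
proof -
  have J: "JAC (mpolys n :: (((nat, nat) poly_mapping, 'a) poly_mapping) set)"
  proof (induction n)
    case 0
    show ?case using JAC0[OF JAC_UNIV[OF assms(2,3)]] .
  next
    case (Suc n)
    show ?case unfolding mpolys_Suc using JAC_step[OF mpolys_subr Suc.IH] .
  qed
  show ?thesis using JAC_fin[OF mpolys_subr J] .
qed


end
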